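(* Let $D$ be a directed graph whose minimum feedback vertex set has cardinality exactly one. Then for an integer $q\ge 2$, $D$ is $q$-solvable if and only if $q=2$.
   Context: A directed graph $D=(V,E)$ has arcs $E \subseteq \{(u,v)\in V^2 : u \neq v\}$ (bidirectional pairs allowed, forming directed cycles of length 2). A feedback vertex set is a set $S\subseteq V$ such that $D-S$ contains no directed cycle. $N^-(v)=\{u:(u,v)\in E\}$. For $q\ge2$ let $[q]=\{0,\dots,q-1\}$. A $D$-function over $[q]$ is a map $f=(f_v)_{v\in V}:[q]^V\to[q]^V$ with each $f_v(x)$ depending only on $(x_u)_{u\in N^-(v)}$. $D$ is $q$-solvable if some $D$-function $f$ over $[q]$ has the property that for every $x\in[q]^V$ there is $v$ with $f_v(x)=x_v$. *)

theory Defs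
  imports "HOL-Library.FuncSet"
begin

definition digraph :: "'a set \<Rightarrow> ('a \<times> 'a) set \<Rightarrow> bool" where
  "digraph V E \<longleftrightarrow> finite V \<and> E \<subseteq> V \<times> V \<and> (\<forall>u. (u, u) \<notin> E)"

definition feedback_vertex_set :: "'a set \<Rightarrow> ('a \<times> 'a) set \<Rightarrow> 'a set \<Rightarrow> bool" where
  "feedback_vertex_set V E S \<longleftrightarrow> S \<subseteq> V \<and> acyclic (E \<inter> ((V - S) \<times> (V - S)))"

definition min_fvs_card :: "'a set \<Rightarrow> ('a \<times> 'a) set \<Rightarrow> nat" where
  "min_fvs_card V E = (LEAST k. \<exists>S. feedback_vertex_set V E S \<and> card S = k)"

definition in_nbrs :: "('a \<times> 'a) set \<Rightarrow> 'a \<Rightarrow> 'a set" where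
  "in_nbrs E v = {u. (u, v) \<in> E}"

definition configs :: "'a set \<Rightarrow> nat \<Rightarrow> ('a \<Rightarrow> nat) set" where
  "configs V q = V \<rightarrow>\<^sub>E {..<q}"

definition D_function :: "'a set \<Rightarrow> ('a \<times> 'a) set \<Rightarrow> nat \<Rightarrow> (('a \<Rightarrow> nat) \<Rightarrow> ('a \<Rightarrow> nat)) \<Rightarrow> bool" where
  "D_function V E q f \<longleftrightarrow>
     (\<forall>x \<in> configs V q. f x \<in> configs V q) \<and>
     (\<forall>v \<in> V. \<forall>x \<in> configs V q. \<forall>y \<in> configs V q.
        (\<forall>u \<in> in_nbrs E v. x u = y u) \<longrightarrow> f x v = f y v)"

definition q_solvable :: "'a set \<Rightarrow> ('a \<times> 'a) set \<Rightarrow> nat \<Rightarrow> bool" where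
  "q_solvable V E q \<longleftrightarrow>
     (\<exists>f. D_function V E q f \<and> (\<forall>x \<in> configs V q. \<exists>v \<in> V. f x v = x v))"

end

theory Submission
  imports Defs
begin

lemma configs_upd:
  assumes "x \<in> configs V q" "s \<in> V" "c < q"
  shows "x(s := c) \<in> configs V q"
  using assms unfolding configs_def PiE_def extensional_def by auto

lemma Df_dep:
  assumes "D_function V E q f" "x \<in> configs V q" "z \<in> configs V q" "v \<in> V"
    "\<forall>u\<in>in_nbrs E v. x u = z u"
  shows "f x v = f z v"
  using assms unfolding D_function_def by blast

lemma config_lt: "x \<in> configs V q \<Longrightarrow> v \<in> V \<Longrightarrow> x v < q"
  unfolding configs_def by auto

lemma not_solvable_aux:
  assumes dg: "digraph V E" and w: "w \<in> V"
    and ac: "acyclic (E \<inter> ((V - {w}) \<times> (V - {w})))" and q: "q \<ge> 3"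
    and Df: "D_function V E q f"
    and U: "finite U" "U \<subseteq> V - {w}"
  shows "\<exists>y\<in>configs V q. \<forall>v\<in>U. y v \<noteq> f (y(w:=0)) v \<and> y v \<noteq> f (y(w:=1)) v"
  using U
proof (induction U rule: finite_psubset_induct)
  case (psubset U)
  define E' where "E' = E \<inter> ((V - {w}) \<times> (V - {w}))"
  show ?case
  proof (cases "U = {}")
    case True
    have "(\<lambda>v. if v \<in> V then 0 else undefined) \<in> configs V q"
      using q unfolding configs_def PiE_def extensional_def by auto
    then show ?thesis using True by blast
  next
    case False
    have finE: "finite E" using dg unfolding digraph_def
      using finite_subset by blast
    have "finite E'" unfolding E'_def using finE by auto
    then have "wf (E'\<inverse>)" using ac finite_acyclic_wf_converse unfolding E'_def by blast
    then obtain s where sU: "s \<in> U" and sink: "\<forall>y. (y, s) \<in> E'\<inverse> \<longrightarrow> y \<notin> U"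
      using False unfolding wf_eq_minimal by blast
    have sub: "U - {s} \<subset> U" using sU by auto
    have "U - {s} \<subseteq> V - {w}" using psubset.prems by auto
    from psubset.IH[OF sub this] obtain y where y: "y \<in> configs V q"
      and yw: "\<forall>v\<in>U - {s}. y v \<noteq> f (y(w:=0)) v \<and> y v \<noteq> f (y(w:=1)) v"
      by blast
    have sV: "s \<in> V" "s \<noteq> w" using sU psubset.prems by auto
    have ex3: "\<exists>c::nat. c < 3 \<and> c \<noteq> \<alpha> \<and> c \<noteq> \<beta>" for \<alpha> \<beta> :: nat by presburger
    obtain c :: nat where c: "c < 3" "c \<noteq> f (y(w:=0)) s" "c \<noteq> f (y(w:=1)) s"
      using ex3 by blast
    define y' where "y' = y(s := c)"
    have y': "y' \<in> configs V q" unfolding y'_def using configs_upd[OF y sV(1)] c q by simp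
    have y0: "y(w:=0) \<in> configs V q" "y(w:=1) \<in> configs V q"
      using configs_upd[OF y w] q by auto
    have y'0: "y'(w:=0) \<in> configs V q" "y'(w:=1) \<in> configs V q"
      using configs_upd[OF y' w] q by auto
    have loop: "s \<notin> in_nbrs E s" using dg unfolding digraph_def in_nbrs_def by auto
    have "\<forall>v\<in>U. y' v \<noteq> f (y'(w:=0)) v \<and> y' v \<noteq> f (y'(w:=1)) v"
    proof
      fix v assume vU: "v \<in> U"
      have vV: "v \<in> V" "v \<noteq> w" using vU psubset.prems by auto
      show "y' v \<noteq> f (y'(w:=0)) v \<and> y' v \<noteq> f (y'(w:=1)) v"
      proof (cases "v = s")
        case True
        have "f (y'(w:=0)) s = f (y(w:=0)) s"
          by (rule Df_dep[OF Df y'0(1) y0(1) sV(1)]) (use loop in \<open>auto simp: y'_def\<close>)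
        moreover have "f (y'(w:=1)) s = f (y(w:=1)) s"
          by (rule Df_dep[OF Df y'0(2) y0(2) sV(1)]) (use loop in \<open>auto simp: y'_def\<close>)
        ultimately show ?thesis using True c by (simp add: y'_def)
      next
        case False
        have nin: "s \<notin> in_nbrs E v"
        proof
          assume "s \<in> in_nbrs E v"
          then have "(s, v) \<in> E'" unfolding in_nbrs_def E'_def using sV vV by auto
          then show False using sink vU by auto
        qed
        have "f (y'(w:=0)) v = f (y(w:=0)) v"
          by (rule Df_dep[OF Df y'0(1) y0(1) vV(1)]) (use nin in \<open>auto simp: y'_def\<close>)
        moreover have "f (y'(w:=1)) v = f (y(w:=1)) v"
          by (rule Df_dep[OF Df y'0(2) y0(2) vV(1)]) (use nin in \<open>auto simp: y'_def\<close>)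
        ultimately show ?thesis using False yw vU by (simp add: y'_def)
      qed
    qed
    then show ?thesis using y' by blast
  qed
qed

lemma not_solvable:
  assumes dg: "digraph V E" and w: "w \<in> V"
    and ac: "acyclic (E \<inter> ((V - {w}) \<times> (V - {w})))" and q: "q \<ge> 3"
  shows "\<not> q_solvable V E q"
proof
  assume "q_solvable V E q"
  then obtain f where Df: "D_function V E q f"
    and sol: "\<forall>x \<in> configs V q. \<exists>v \<in> V. f x v = x v"
    unfolding q_solvable_def by blast
  have finV: "finite V" using dg unfolding digraph_def by auto
  obtain y where y: "y \<in> configs V q"
    and yw: "\<forall>v\<in>V - {w}. y v \<noteq> f (y(w:=0)) v \<and> y v \<noteq> f (y(w:=1)) v"
    using not_solvable_aux[OF dg w ac q Df, of "V - {w}"] finV by auto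
  have y0: "y(w:=0) \<in> configs V q" "y(w:=1) \<in> configs V q"
    using configs_upd[OF y w] q by auto
  have loop: "w \<notin> in_nbrs E w" using dg unfolding digraph_def in_nbrs_def by auto
  have g: "f (y(w:=0)) w = f (y(w:=1)) w"
    by (rule Df_dep[OF Df y0(1) y0(2) w]) (use loop in auto)
  define a :: nat where "a = (if f (y(w:=0)) w = 0 then 1 else 0)"
  have ya: "y(w:=a) \<in> configs V q" using y0 a_def by auto
  have "\<forall>v\<in>V. f (y(w:=a)) v \<noteq> (y(w:=a)) v"
  proof
    fix v assume "v \<in> V"
    show "f (y(w:=a)) v \<noteq> (y(w:=a)) v"
    proof (cases "v = w")
      case True then show ?thesis using g a_def by auto
    next
      case False
      have "a = 0 \<or> a = 1" using a_def by auto
      moreover have "v \<in> V - {w}" using \<open>v \<in> V\<close> False by auto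
      moreover have "y v \<noteq> f (y(w:=0)) v" "y v \<noteq> f (y(w:=1)) v"
        using yw \<open>v \<in> V - {w}\<close> by auto
      ultimately show ?thesis using False by auto
    qed
  qed
  then show False using sol ya by blast
qed

lemma solvable2:
  assumes dg: "digraph V E" and cyc: "\<not> acyclic E"
  shows "q_solvable V E 2"
proof -
  have EV: "E \<subseteq> V \<times> V" and nl: "\<forall>u. (u,u) \<notin> E" using dg unfolding digraph_def by auto
  obtain z where "(z, z) \<in> E\<^sup>+" using cyc unfolding acyclic_def by blast
  then obtain u where zu: "(z, u) \<in> E\<^sup>*" and uz: "(u, z) \<in> E" using tranclD2 by metis
  have zV: "z \<in> V" and uV: "u \<in> V" using uz EV by auto
  define d where "d v = (LEAST n. (z, v) \<in> E ^^ n)" for v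
  define p where "p v = (SOME p. (p, v) \<in> E \<and> (z, p) \<in> E ^^ (d v - 1))" for v
  have dpow: "(z, v) \<in> E ^^ d v" if "(z, v) \<in> E\<^sup>*" for v
  proof -
    from that obtain n where "(z, v) \<in> E ^^ n" using rtrancl_power by blast
    then show ?thesis unfolding d_def by (rule LeastI)
  qed
  have dz: "d z = 0" unfolding d_def by (rule Least_eq_0) simp
  have pprop: "(p v, v) \<in> E \<and> (z, p v) \<in> E ^^ (d v - 1) \<and> d v \<noteq> 0"
    if "(z, v) \<in> E\<^sup>*" "v \<noteq> z" for v
  proof -
    have dv: "(z, v) \<in> E ^^ d v" using dpow[OF that(1)] .
    have nz: "d v \<noteq> 0" using dv that(2) by (cases "d v") auto
    then have "(z, v) \<in> E ^^ (d v - 1) O E" using dv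
      by (metis Suc_diff_1 not_gr_zero relpow.simps(2))
    then have "\<exists>p. (p, v) \<in> E \<and> (z, p) \<in> E ^^ (d v - 1)" by blast
    then have "(p v, v) \<in> E \<and> (z, p v) \<in> E ^^ (d v - 1)"
      unfolding p_def by (rule someI_ex)
    then show ?thesis using nz by blast
  qed
  have dp: "d (p v) = d v - 1 \<and> (z, p v) \<in> E\<^sup>*" if "(z, v) \<in> E\<^sup>*" "v \<noteq> z" for v
  proof -
    have pp: "(p v, v) \<in> E" "(z, p v) \<in> E ^^ (d v - 1)" "d v \<noteq> 0" using pprop[OF that] by auto
    have r: "(z, p v) \<in> E\<^sup>*" using pp(2) rtrancl_power by blast
    have le1: "d (p v) \<le> d v - 1" unfolding d_def[of "p v"] by (rule Least_le[where P="\<lambda>n. (z, p v) \<in> E ^^ n", OF pp(2)])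
    have "(z, v) \<in> E ^^ Suc (d (p v))" using dpow[OF r] pp(1) by auto
    then have "d v \<le> Suc (d (p v))" unfolding d_def by (rule Least_le)
    then show ?thesis using le1 pp(3) r by auto
  qed
  define f where "f x = (\<lambda>v. if v \<in> V then (if v = z then (x u + d u) mod 2
      else if (z, v) \<in> E\<^sup>* then x (p v) else 0) else undefined)" for x :: "'a \<Rightarrow> nat"
  have pV: "p v \<in> V" "p v \<in> in_nbrs E v" if "(z, v) \<in> E\<^sup>*" "v \<noteq> z" for v
    using pprop[OF that] EV unfolding in_nbrs_def by auto
  have Df: "D_function V E 2 f"
    unfolding D_function_def
  proof (intro conjI ballI impI)
    fix x assume x: "x \<in> configs V 2"
    show "f x \<in> configs V 2"
      unfolding configs_def f_def using config_lt[OF x] pV uV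
      by (auto simp: PiE_def extensional_def)
  next
    fix v x y assume "v \<in> V" "x \<in> configs V 2" "y \<in> configs V 2"
      and eq: "\<forall>u\<in>in_nbrs E v. x u = y u"
    have "u \<in> in_nbrs E z" using uz unfolding in_nbrs_def by auto
    then show "f x v = f y v" unfolding f_def using eq pV by auto
  qed
  have "\<forall>x \<in> configs V 2. \<exists>v \<in> V. f x v = x v"
  proof (rule ballI, rule ccontr)
    fix x assume x: "x \<in> configs V 2" and nc: "\<not> (\<exists>v \<in> V. f x v = x v)"
    have key: "\<forall>v. (z, v) \<in> E\<^sup>* \<longrightarrow> d v = n \<longrightarrow> x v = (x z + n) mod 2" for n
    proof (induction n)
      case 0
      show ?case
      proof (intro allI impI)
        fix v assume "(z, v) \<in> E\<^sup>*" "d v = 0"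
        then have "v = z" using dpow by fastforce
        then show "x v = (x z + 0) mod 2" using config_lt[OF x zV] by auto
      qed
    next
      case (Suc n)
      show ?case
      proof (intro allI impI)
        fix v assume r: "(z, v) \<in> E\<^sup>*" and dv: "d v = Suc n"
        have vz: "v \<noteq> z" using dz dv by auto
        have vV: "v \<in> V" using pprop[OF r vz] EV by auto
        have dpv: "d (p v) = n" "(z, p v) \<in> E\<^sup>*" using dp[OF r vz] dv by auto
        have xp: "x (p v) = (x z + n) mod 2" using Suc dpv by blast
        have "f x v \<noteq> x v" using nc vV by auto
        then have "x (p v) \<noteq> x v" unfolding f_def using vV vz r by auto
        moreover have "x v < 2" "x (p v) < 2" using config_lt[OF x] vV pV[OF r vz] by auto
        ultimately show "x v = (x z + Suc n) mod 2" using xp by presburger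
      qed
    qed
    have "x u = (x z + d u) mod 2" using key zu by blast
    moreover have "f x z = (x u + d u) mod 2" unfolding f_def using zV by auto
    moreover have "x z < 2" using config_lt[OF x zV] .
    ultimately have "f x z = x z" by presburger
    then show False using nc zV by blast
  qed
  then show ?thesis unfolding q_solvable_def using Df by blast
qed

theorem corollary12:
  fixes V :: "'a set" and E :: "('a \<times> 'a) set" and q :: nat
  assumes "digraph V E"
    and "min_fvs_card V E = 1"
    and "q \<ge> 2"
  shows "q_solvable V E q \<longleftrightarrow> q = 2"
proof -
  have EV: "E \<subseteq> V \<times> V" using assms(1) unfolding digraph_def by auto
  have "feedback_vertex_set V E V" unfolding feedback_vertex_set_def by (auto simp: acyclic_def)
  then have ex: "\<exists>k. \<exists>S. feedback_vertex_set V E S \<and> card S = k" by blast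
  have "\<exists>S. feedback_vertex_set V E S \<and> card S = 1"
    using LeastI_ex[OF ex] assms(2) unfolding min_fvs_card_def by simp
  then obtain w where w: "feedback_vertex_set V E {w}" by (auto simp: card_1_singleton_iff)
  have wV: "w \<in> V" and ac: "acyclic (E \<inter> ((V - {w}) \<times> (V - {w})))"
    using w unfolding feedback_vertex_set_def by auto
  have cyc: "\<not> acyclic E"
  proof
    assume "acyclic E"
    then have "feedback_vertex_set V E {}" unfolding feedback_vertex_set_def
      using EV by (simp add: Int_absorb2)
    then have "min_fvs_card V E \<le> 0" unfolding min_fvs_card_def
      by (intro Least_le) auto
    then show False using assms(2) by simp
  qed
  show ?thesis
  proof
    assume s: "q_solvable V E q"
    show "q = 2"
    proof (rule ccontr)
      assume "q \<noteq> 2"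
      then have "q \<ge> 3" using assms(3) by auto
      then show False using not_solvable[OF assms(1) wV ac] s by blast
    qed
  next
    assume "q = 2"
    then show "q_solvable V E q" using solvable2[OF assms(1) cyc] by simp
  qed
qed

end
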